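(* Consider a Levin–Wen string-net model built from a multiplicity-free fusion category with label set $\mathcal{F}$ in which every label is self-dual ($\bar a=a$) and which has an $S$-matrix $S$. Let $a\in\mathcal{F}$ with $a\neq 1$, let $e$ be an edge of the trivalent lattice, and let $p$ be either of the two plaquettes adjacent to $e$, with Levin–Wen plaquette operator $B_p$. Then for every $|\psi\rangle\in\mathcal{H}_{\mathrm{valid}}$ with $B_p|\psi\rangle=|\psi\rangle$, one has $B_p\big(O_a^{(e)}|\psi\rangle\big)=0$.
   Context: Each edge of a trivalent (e.g. honeycomb) lattice carries a qudit with orthonormal basis $\{|b\rangle\}_{b\in\mathcal{F}}$. The fusion category has fusion rules $\delta_{abc}\in\{0,1\}$, quantum dimensions $d_s>0$, total quantum dimension $D=\sqrt{\sum_j d_j^2}$, and unitary symmetric $S$-matrix. The vertex projector $A_v$ projects onto configurations where the three labels $(a,b,c)$ at vertex $v$ satisfy $\delta_{abc}=1$; $\mathcal{H}_{\mathrm{valid}}=\mathrm{span}\{|\psi\rangle: A_v|\psi\rangle=|\psi\rangle\ \forall v\}$. The plaquette operator is the standard Levin–Wen operator $B_p=\sum_{s\in\mathcal{F}}\frac{d_s}{D^2}B_p^s$, where $B_p^s$ (defined on $\mathcal{H}_{\mathrm{valid}}$ via the $F$-symbols) inserts a loop of type $s$ inside plaquette $p$ and fuses it into the boundary edges. The single-qudit operator $O_a^{(e)}$ acts on the qudit at edge $e$ by $O_a|b\rangle=\frac{S_{ab}}{S_{1b}}|b\rangle$ for all $b\in\mathcal{F}$, and as identity elsewhere. *)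

theory Defs
  imports Complex_Main
begin

text \<open>Fusion rules N a b c stand for
  delta_{abc} in {0,1}. Since every label is self-dual, delta is symmetric in all three
  arguments and delta_{1ab} = [a = b].\<close>

definition fusion_rules :: "'l::finite \<Rightarrow> ('l \<Rightarrow> 'l \<Rightarrow> 'l \<Rightarrow> bool) \<Rightarrow> bool" where
  "fusion_rules one N \<longleftrightarrow>
     (\<forall>a b c. N a b c = N b a c \<and> N a b c = N a c b) \<and>
     (\<forall>a b. N one a b \<longleftrightarrow> a = b) \<and>
     (\<forall>a b c d. (\<Sum>x\<in>UNIV. (if N a b x \<and> N x c d then 1 else 0 :: nat))
              = (\<Sum>x\<in>UNIV. (if N b c x \<and> N a x d then 1 else 0 :: nat)))"

definition quantum_dims :: "'l::finite \<Rightarrow> ('l \<Rightarrow> 'l \<Rightarrow> 'l \<Rightarrow> bool) \<Rightarrow> ('l \<Rightarrow> real) \<Rightarrow> bool" where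
  "quantum_dims one N d \<longleftrightarrow>
     (\<forall>a. d a > 0) \<and> d one = 1 \<and>
     (\<forall>a b. d a * d b = (\<Sum>c\<in>{c. N a b c}. d c))"

definition totalD :: "('l::finite \<Rightarrow> real) \<Rightarrow> real" where
  "totalD d = sqrt (\<Sum>j\<in>UNIV. (d j)\<^sup>2)"

text \<open>F-symbols in the Levin-Wen convention: F i j m k l n stands for F^{ijm}_{kln}
  (i,j fuse to m; k,l fuse to m*; after the move l,i fuse to n* and j,k to n).
  Stars are dropped since all labels are self-dual.  v_i = sqrt d_i.
  Axioms: normalization, tetrahedral symmetry, pentagon (Levin-Wen eqs. (3)-(5)),
  and unitarity of each F-move.\<close>

definition F_symbols :: "'l::finite \<Rightarrow> ('l \<Rightarrow> 'l \<Rightarrow> 'l \<Rightarrow> bool) \<Rightarrow> ('l \<Rightarrow> real)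
      \<Rightarrow> ('l \<Rightarrow> 'l \<Rightarrow> 'l \<Rightarrow> 'l \<Rightarrow> 'l \<Rightarrow> 'l \<Rightarrow> complex) \<Rightarrow> bool" where
  "F_symbols one N d F \<longleftrightarrow>
     (let v = (\<lambda>i. complex_of_real (sqrt (d i))) in
     (\<forall>i j m k l n. F i j m k l n \<noteq> 0 \<longrightarrow> N i j m \<and> N k l m \<and> N l i n \<and> N j k n) \<and>
     (\<forall>i j k. F i j k j i one = (if N i j k then v k / (v i * v j) else 0)) \<and>
     (\<forall>i j m k l n.
        F i j m k l n = F l k m j i n \<and>
        F i j m k l n = F j i m l k n \<and>
        F i j m k l n = F i m j k n l * (v m * v n) / (v j * v l)) \<and>
     (\<forall>m l q k p j i s r.
        (\<Sum>n\<in>UNIV. F m l q k p n * F j i p m n s * F j s n l k r)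
          = F j i p q k r * F r i q m l s) \<and>
     (\<forall>i j k l m m'. N i j m \<and> N k l m \<and> N i j m' \<and> N k l m' \<longrightarrow>
        (\<Sum>n\<in>UNIV. F i j m k l n * cnj (F i j m' k l n)) = (if m = m' then 1 else 0)) \<and>
     (\<forall>i j k l n n'. N l i n \<and> N j k n \<and> N l i n' \<and> N j k n' \<longrightarrow>
        (\<Sum>m\<in>UNIV. cnj (F i j m k l n) * F i j m k l n') = (if n = n' then 1 else 0)))"

definition fusion_category :: "'l::finite \<Rightarrow> ('l \<Rightarrow> 'l \<Rightarrow> 'l \<Rightarrow> bool) \<Rightarrow> ('l \<Rightarrow> real)
      \<Rightarrow> ('l \<Rightarrow> 'l \<Rightarrow> 'l \<Rightarrow> 'l \<Rightarrow> 'l \<Rightarrow> 'l \<Rightarrow> complex) \<Rightarrow> bool" where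
  "fusion_category one N d F \<longleftrightarrow> fusion_rules one N \<and> quantum_dims one N d \<and> F_symbols one N d F"

definition S_matrix :: "'l::finite \<Rightarrow> ('l \<Rightarrow> real) \<Rightarrow> ('l \<Rightarrow> 'l \<Rightarrow> complex) \<Rightarrow> bool" where
  "S_matrix one d S \<longleftrightarrow>
     (\<forall>a b. S a b = S b a) \<and>
     (\<forall>a c. (\<Sum>b\<in>UNIV. S a b * cnj (S c b)) = (if a = c then 1 else 0)) \<and>
     (\<forall>b. S one b = complex_of_real (d b / totalD d))"

definition trivalent_lattice :: "('v::finite \<Rightarrow> 'e::finite set) \<Rightarrow> bool" where
  "trivalent_lattice inc \<longleftrightarrow> (\<forall>v. card (inc v) = 3) \<and> (\<forall>e. card {v. e \<in> inc v} = 2)"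

type_synonym ('e, 'l) state = "('e \<Rightarrow> 'l) \<Rightarrow> complex"

definition vertex_ok :: "('l \<Rightarrow> 'l \<Rightarrow> 'l \<Rightarrow> bool) \<Rightarrow> ('v \<Rightarrow> 'e set) \<Rightarrow> 'v \<Rightarrow> ('e \<Rightarrow> 'l) \<Rightarrow> bool" where
  "vertex_ok N inc v \<sigma> \<longleftrightarrow>
     (\<forall>e1 e2 e3. inc v = {e1, e2, e3} \<and> distinct [e1, e2, e3] \<longrightarrow> N (\<sigma> e1) (\<sigma> e2) (\<sigma> e3))"

definition A_v :: "('l \<Rightarrow> 'l \<Rightarrow> 'l \<Rightarrow> bool) \<Rightarrow> ('v \<Rightarrow> 'e set) \<Rightarrow> 'v \<Rightarrow> ('e, 'l) state \<Rightarrow> ('e, 'l) state" where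
  "A_v N inc v \<psi> = (\<lambda>\<sigma>. if vertex_ok N inc v \<sigma> then \<psi> \<sigma> else 0)"

definition H_valid :: "('l \<Rightarrow> 'l \<Rightarrow> 'l \<Rightarrow> bool) \<Rightarrow> ('v \<Rightarrow> 'e set) \<Rightarrow> ('e, 'l) state set" where
  "H_valid N inc = {\<psi>. \<forall>v. A_v N inc v \<psi> = \<psi>}"

text \<open>A plaquette with n boundary edges bs ! 0 .. bs ! (n-1) (in cyclic order), corners
  vs ! k joining bs ! (k-1 mod n) and bs ! k, and external legs xs ! k at vs ! k.\<close>
definition prv :: "nat \<Rightarrow> nat \<Rightarrow> nat" where
  "prv n k = (k + n - 1) mod n"

definition is_plaquette :: "('v \<Rightarrow> 'e set) \<Rightarrow> 'e list \<Rightarrow> 'e list \<Rightarrow> 'v list \<Rightarrow> bool" where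
  "is_plaquette inc bs xs vs \<longleftrightarrow>
     bs \<noteq> [] \<and> length xs = length bs \<and> length vs = length bs \<and>
     distinct bs \<and> distinct vs \<and> set xs \<inter> set bs = {} \<and>
     (\<forall>k < length bs. inc (vs ! k) = {bs ! prv (length bs) k, bs ! k, xs ! k})"

definition B_s :: "('l \<Rightarrow> 'l \<Rightarrow> 'l \<Rightarrow> 'l \<Rightarrow> 'l \<Rightarrow> 'l \<Rightarrow> complex) \<Rightarrow> 'e list \<Rightarrow> 'e list
      \<Rightarrow> 'l \<Rightarrow> ('e::finite, 'l::finite) state \<Rightarrow> ('e, 'l) state" where
  "B_s F bs xs s \<psi> = (\<lambda>\<sigma>'. \<Sum>\<sigma>\<in>UNIV.
      (if (\<forall>x. x \<notin> set bs \<longrightarrow> \<sigma>' x = \<sigma> x)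
       then (\<Prod>k<length bs. F (\<sigma> (xs ! k)) (\<sigma> (bs ! k)) (\<sigma> (bs ! prv (length bs) k))
                               s (\<sigma>' (bs ! prv (length bs) k)) (\<sigma>' (bs ! k)))
       else 0) * \<psi> \<sigma>)"

definition B_p :: "('l \<Rightarrow> real) \<Rightarrow> ('l \<Rightarrow> 'l \<Rightarrow> 'l \<Rightarrow> 'l \<Rightarrow> 'l \<Rightarrow> 'l \<Rightarrow> complex) \<Rightarrow> 'e list
      \<Rightarrow> 'e list \<Rightarrow> ('e::finite, 'l::finite) state \<Rightarrow> ('e, 'l) state" where
  "B_p d F bs xs \<psi> = (\<lambda>\<sigma>. \<Sum>s\<in>UNIV. complex_of_real (d s / (totalD d)\<^sup>2) * B_s F bs xs s \<psi> \<sigma>)"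

definition O_op :: "('l \<Rightarrow> 'l \<Rightarrow> complex) \<Rightarrow> 'l \<Rightarrow> 'l \<Rightarrow> 'e \<Rightarrow> ('e, 'l) state \<Rightarrow> ('e, 'l) state" where
  "O_op S one a e \<psi> = (\<lambda>\<sigma>. S a (\<sigma> e) / S one (\<sigma> e) * \<psi> \<sigma>)"

end

theory Submission
  imports Defs "HOL-Library.FuncSet"
begin

definition vv :: "('l \<Rightarrow> real) \<Rightarrow> 'l \<Rightarrow> complex" where
  "vv d i = complex_of_real (sqrt (d i))"

definition Kr :: "('l \<Rightarrow> 'l \<Rightarrow> 'l \<Rightarrow> 'l \<Rightarrow> 'l \<Rightarrow> 'l \<Rightarrow> complex) \<Rightarrow> 'e list \<Rightarrow> 'e list
      \<Rightarrow> 'l \<Rightarrow> ('e \<Rightarrow> 'l) \<Rightarrow> ('e \<Rightarrow> 'l) \<Rightarrow> complex" where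
  "Kr F bs xs s \<sigma>' \<sigma> = (if (\<forall>x. x \<notin> set bs \<longrightarrow> \<sigma>' x = \<sigma> x)
       then (\<Prod>k<length bs. F (\<sigma> (xs ! k)) (\<sigma> (bs ! k)) (\<sigma> (bs ! prv (length bs) k))
                               s (\<sigma>' (bs ! prv (length bs) k)) (\<sigma>' (bs ! k)))
       else 0)"

lemma Bs_eq: "B_s F bs xs s \<psi> \<sigma>' = (\<Sum>\<sigma>\<in>UNIV. Kr F bs xs s \<sigma>' \<sigma> * \<psi> \<sigma>)"
  by (simp add: B_s_def Kr_def)

locale FC =
  fixes one :: "'l::finite" and N :: "'l \<Rightarrow> 'l \<Rightarrow> 'l \<Rightarrow> bool" and d :: "'l \<Rightarrow> real"
    and F :: "'l \<Rightarrow> 'l \<Rightarrow> 'l \<Rightarrow> 'l \<Rightarrow> 'l \<Rightarrow> 'l \<Rightarrow> complex"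
  assumes fc: "fusion_category one N d F"
begin

abbreviation "v \<equiv> vv d"

lemma N12: "N a b c = N b a c" using fc unfolding fusion_category_def fusion_rules_def by blast
lemma N23: "N a b c = N a c b" using fc unfolding fusion_category_def fusion_rules_def by blast
lemma N_one: "N one a b \<longleftrightarrow> a = b" using fc unfolding fusion_category_def fusion_rules_def by blast
lemma d_pos: "d a > 0" using fc unfolding fusion_category_def quantum_dims_def by blast
lemma d_one: "d one = 1" using fc unfolding fusion_category_def quantum_dims_def by blast
lemma d_mult: "d a * d b = (\<Sum>c\<in>{c. N a b c}. d c)" using fc unfolding fusion_category_def quantum_dims_def by blast

lemma Fax: "F_symbols one N d F" using fc unfolding fusion_category_def by blast

lemma Fconj: "(\<forall>i j m k l n. F i j m k l n \<noteq> 0 \<longrightarrow> N i j m \<and> N k l m \<and> N l i n \<and> N j k n) \<and>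
     (\<forall>i j k. F i j k j i one = (if N i j k then v k / (v i * v j) else 0)) \<and>
     (\<forall>i j m k l n.
        F i j m k l n = F l k m j i n \<and>
        F i j m k l n = F j i m l k n \<and>
        F i j m k l n = F i m j k n l * (v m * v n) / (v j * v l)) \<and>
     (\<forall>m l q k p j i s r.
        (\<Sum>n\<in>UNIV. F m l q k p n * F j i p m n s * F j s n l k r)
          = F j i p q k r * F r i q m l s)"
  using Fax unfolding F_symbols_def Let_def vv_def by (elim conjE) (intro conjI; assumption)

lemma adm: "F i j m k l n \<noteq> 0 \<Longrightarrow> N i j m \<and> N k l m \<and> N l i n \<and> N j k n"
  using Fconj[THEN conjunct1] by blast
lemma norm: "F i j k j i one = (if N i j k then v k / (v i * v j) else 0)"
  using Fconj[THEN conjunct2, THEN conjunct1] by blast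
lemma sym1: "F i j m k l n = F l k m j i n"
  using Fconj[THEN conjunct2, THEN conjunct2, THEN conjunct1] by blast
lemma sym2: "F i j m k l n = F j i m l k n"
  using Fconj[THEN conjunct2, THEN conjunct2, THEN conjunct1] by blast
lemma sym3: "F i j m k l n = F i m j k n l * (v m * v n) / (v j * v l)"
  using Fconj[THEN conjunct2, THEN conjunct2, THEN conjunct1] by blast
lemma pent: "(\<Sum>n\<in>UNIV. F m l q k p n * F j i p m n s * F j s n l k r)
          = F j i p q k r * F r i q m l s"
  using Fconj[THEN conjunct2, THEN conjunct2, THEN conjunct2] by blast

lemma v_nz: "v a \<noteq> 0" using d_pos[of a] by (simp add: vv_def)
lemma v_one: "v one = 1" by (simp add: vv_def d_one)
lemma v_sq: "v a * v a = complex_of_real (d a)"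
  using d_pos[of a] by (simp add: vv_def flip: of_real_mult)

lemma Np1: "N a b c = N b a c" by (rule N12)
lemma Np2: "N a b c = N a c b" by (rule N23)
lemma Np3: "N a b c = N c a b" using N12 N23 by metis
lemma Np4: "N a b c = N b c a" using N12 N23 by metis
lemma Np5: "N a b c = N c b a" using N12 N23 by metis
lemma N_one2: "N a one b \<longleftrightarrow> a = b" using N_one N12 by metis
lemma N_one3: "N a b one \<longleftrightarrow> a = b" using N_one N12 N23 by metis

lemma F_one6: "F i j m k l one = (if l = i \<and> k = j \<and> N i j m then v m / (v i * v j) else 0)"
proof (cases "F i j m k l one = 0")
  case True
  then show ?thesis using norm[of i j m] by auto
next
  case False
  from adm[OF False] have "N l i one" "N j k one" "N i j m" by auto
  hence "l = i" "k = j" using N_one3 by auto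
  then show ?thesis using norm[of i j m] \<open>N i j m\<close> by simp
qed

lemma F_one5: "F c e a a one c = (if N c a e then 1 else 0)"
proof -
  have "F c e a a one c = F c a e a c one * (v a * v c) / (v e * v one)" by (rule sym3)
  also have "\<dots> = (if N c a e then 1 else 0)"
    using v_nz[of a] v_nz[of c] v_nz[of e] by (simp add: norm v_one field_simps)
  finally show ?thesis .
qed

lemma F_one2': "F j one j s n s = (if N s j n then 1 else 0)"
proof -
  have "F j one j s n s = F one j j n s s" by (rule sym2)
  also have "\<dots> = F s n j j one s" by (rule sym1)
  finally show ?thesis using F_one5[of s n j] by simp
qed

lemma F_one2: "F j one p q k r = (if p = j \<and> q = r \<and> N r j k then 1 else 0)"
proof (cases "F j one p q k r = 0")
  case True
  then show ?thesis using F_one2'[of j r k] by auto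
next
  case False
  from adm[OF False] have "N j one p" "N one q r" by auto
  hence "p = j" "q = r" using N_one N_one2 by auto
  then show ?thesis using F_one2'[of j r k] by simp
qed

lemma orthB': "(\<Sum>n\<in>UNIV. F S L Q K J n * F J S n L K R) = (if Q = R \<and> N R J K \<and> N S R L then 1 else 0)"
proof -
  have "(\<Sum>n\<in>UNIV. F S L Q K J n * F J S n L K R) = (\<Sum>n\<in>UNIV. F S L Q K J n * F J one J S n S * F J S n L K R)"
  proof (rule sum.cong)
    fix n
    show "F S L Q K J n * F J S n L K R = F S L Q K J n * F J one J S n S * F J S n L K R"
    proof (cases "F J S n L K R = 0")
      case False
      then have "N J S n" using adm by blast
      then show ?thesis by (simp add: F_one2' Np1[of J S n])
    qed simp
  qed simp
  also have "\<dots> = F J one J Q K R * F R one Q S L S" by (rule pent)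
  also have "\<dots> = (if Q = R \<and> N R J K \<and> N S R L then 1 else 0)" by (simp add: F_one2)
  finally show ?thesis .
qed

lemma orthB: "(\<Sum>b\<in>UNIV. F b0 b2 u s t b * F b2 s b t b0 u') = (if u = u' \<and> N s t u \<and> N b0 b2 u then 1 else 0)"
proof -
  have e: "F b2 s b t b0 u' = F t b0 b b2 s u'" for b
    using sym1[of t b0 b b2 s u'] sym2[of s b2 b b0 t u'] by simp
  have "(\<Sum>b\<in>UNIV. F b0 b2 u s t b * F b2 s b t b0 u') = (\<Sum>b\<in>UNIV. F b0 b2 u s t b * F t b0 b b2 s u')"
    by (simp add: e)
  also have "\<dots> = (if u = u' \<and> N u' t s \<and> N b0 u' b2 then 1 else 0)" by (rule orthB')
  moreover have "(u = u' \<and> N u' t s \<and> N b0 u' b2) = (u = u' \<and> N s t u \<and> N b0 b2 u)"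
    by (metis Np5 Np2)
  ultimately show ?thesis by simp
qed

lemma cornerA: "F x b0 a0 t a b * F x b a s a2 b2 = (\<Sum>u\<in>UNIV. F a2 s a t a0 u * F x b0 a0 u a2 b2 * F b0 b2 u s t b)"
proof -
  have "(\<Sum>u\<in>UNIV. F a2 s a t a0 u * F b0 x a0 a2 u b2 * F b0 b2 u s t b) = F b0 x a0 a t b * F b x a a2 s b2"
    by (rule pent)
  moreover have "F b0 x a0 a2 u b2 = F x b0 a0 u a2 b2" for u by (rule sym2)
  moreover have "F b0 x a0 a t b = F x b0 a0 t a b" by (rule sym2)
  moreover have "F b x a a2 s b2 = F x b a s a2 b2" by (rule sym2)
  ultimately show ?thesis by simp
qed

abbreviation "cd a \<equiv> complex_of_real (d a)"

lemma E1: "F c2 s b t c u = F c c2 u s t b"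
proof -
  have "F c2 s b t c u = F s c2 b c t u" by (rule sym2)
  also have "\<dots> = F s b c2 c u t * (v b * v u) / (v c2 * v t)" by (rule sym3)
  also have "F s b c2 c u t = F u c c2 b s t" by (rule sym1)
  also have "\<dots> = F c u c2 s b t" by (rule sym2)
  also have "\<dots> = F c c2 u s t b * (v c2 * v t) / (v u * v b)" by (rule sym3)
  finally show ?thesis using v_nz[of b] v_nz[of u] v_nz[of c2] v_nz[of t] by (simp add: field_simps)
qed

lemma E2: "F c c2 u s t b = F u c2 c b t s * (v u * v b) / (v c * v s)"
proof -
  have "F c c2 u s t b = F c2 c u t s b" by (rule sym2)
  also have "\<dots> = F c2 u c t b s * (v u * v b) / (v c * v s)" by (rule sym3)
  also have "F c2 u c t b s = F u c2 c b t s" by (rule sym2)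
  finally show ?thesis .
qed

lemma E3: "F t u s c2 b c = F u c2 c b t s"
proof -
  have "F t u s c2 b c = F b c2 s u t c" by (rule sym1)
  also have "\<dots> = F b s c2 u c t * (v s * v c) / (v c2 * v t)" by (rule sym3)
  also have "F b s c2 u c t = F c u c2 s b t" by (rule sym1)
  also have "\<dots> = F u c c2 b s t" by (rule sym2)
  also have "\<dots> = F u c2 c b t s * (v c2 * v t) / (v c * v s)" by (rule sym3)
  finally show ?thesis using v_nz[of s] v_nz[of c] v_nz[of c2] v_nz[of t] by (simp add: field_simps)
qed

lemma termC: "cd s * cd t * (F c c2 u s t b * F c2 s b t c u)
   = cd t * cd u * cd b / cd c * (F u c2 c b t s * F t u s c2 b c)"
proof -
  have "F c c2 u s t b * F c2 s b t c u = F u c2 c b t s * F u c2 c b t s * ((v u * v u) * (v b * v b)) / ((v c * v c) * (v s * v s))"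
    by (simp add: E1 E2[of c c2 u s t b] field_simps)
  also have "\<dots> = F u c2 c b t s * F t u s c2 b c * (cd u * cd b) / (cd c * cd s)"
    by (simp only: v_sq E3[of t u s c2 b c])
  finally have "F c c2 u s t b * F c2 s b t c u = F u c2 c b t s * F t u s c2 b c * (cd u * cd b) / (cd c * cd s)" .
  moreover have "cd c \<noteq> 0" "cd s \<noteq> 0" using d_pos[of c] d_pos[of s] by auto
  ultimately show ?thesis by (simp add: field_simps)
qed

lemma sumC: assumes "N c c2 u"
  shows "(\<Sum>s\<in>UNIV. \<Sum>t\<in>UNIV. cd s * cd t * (F c c2 u s t b * F c2 s b t c u)) = cd b * cd b * cd u"
proof -
  have Nu: "N u c c2" using assms Np3 by metis
  have "(\<Sum>s\<in>UNIV. \<Sum>t\<in>UNIV. cd s * cd t * (F c c2 u s t b * F c2 s b t c u))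
      = (\<Sum>t\<in>UNIV. \<Sum>s\<in>UNIV. cd t * cd u * cd b / cd c * (F u c2 c b t s * F t u s c2 b c))"
    by (subst sum.swap) (simp add: termC)
  also have "\<dots> = (\<Sum>t\<in>UNIV. cd t * cd u * cd b / cd c * (\<Sum>s\<in>UNIV. F u c2 c b t s * F t u s c2 b c))"
    by (simp add: sum_distrib_left)
  also have "\<dots> = (\<Sum>t\<in>UNIV. cd t * cd u * cd b / cd c * (if N c t b then 1 else 0))"
    by (simp add: orthB' Nu)
  also have "\<dots> = (\<Sum>t\<in>UNIV. cd u * cd b / cd c * (if N c b t then cd t else 0))"
    by (rule sum.cong) (auto simp: Np2[of c _ b])
  also have "\<dots> = cd u * cd b / cd c * (\<Sum>t\<in>UNIV. (if N c b t then cd t else 0))"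
    by (simp add: sum_distrib_left)
  also have "(\<Sum>t\<in>UNIV. (if N c b t then cd t else 0)) = (\<Sum>t\<in>{t. N c b t}. cd t)"
    by (simp add: sum.If_cases)
  also have "(\<Sum>t\<in>{t. N c b t}. cd t) = cd c * cd b"
  proof -
    have "cd c * cd b = complex_of_real (d c * d b)" by simp
    also have "\<dots> = complex_of_real (\<Sum>t\<in>{t. N c b t}. d t)" by (simp only: d_mult[of c b])
    finally show ?thesis by (simp add: of_real_sum)
  qed
  finally show ?thesis using d_pos[of c] by (simp add: field_simps)
qed

lemma prv_lt: "0 < n \<Longrightarrow> prv n k < n" by (simp add: prv_def)
lemma prv_nx: "a < n \<Longrightarrow> prv n (Suc a mod n) = a"
  unfolding prv_def
  by (cases "Suc a < n") (auto simp: mod_if)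
lemma nx_prv: "b < n \<Longrightarrow> Suc (prv n b) mod n = b"
proof -
  assume b: "b < n"
  show ?thesis
  proof (cases b)
    case 0 then show ?thesis using b by (simp add: prv_def)
  next
    case (Suc c) then show ?thesis using b by (simp add: prv_def mod_if)
  qed
qed

lemma cyc:
  fixes U :: "nat \<Rightarrow> 'a"
  assumes j: "j < n" and H: "\<And>k. k < n \<Longrightarrow> k \<noteq> j \<Longrightarrow> U k = U (Suc k mod n)"
  shows "k < n \<Longrightarrow> U k = U j"
proof -
  have P: "i < n \<Longrightarrow> U ((j + 1 + i) mod n) = U ((j + 1) mod n)" for i
  proof (induction i)
    case 0 then show ?case by simp
  next
    case (Suc i)
    have ne: "(j + 1 + i) mod n \<noteq> j"
    proof
      assume "(j + 1 + i) mod n = j"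
      moreover have "j + 1 + i < n + n" using Suc.prems j by simp
      ultimately show False using Suc.prems
        by (cases "j + 1 + i < n") (auto simp: mod_if split: if_splits)
    qed
    have "U ((j + 1 + i) mod n) = U (Suc ((j + 1 + i) mod n) mod n)"
      using H[OF _ ne] j by simp
    also have "Suc ((j + 1 + i) mod n) mod n = (j + 1 + Suc i) mod n"
      by (simp add: mod_Suc_eq)
    finally show ?case using Suc by simp
  qed
  have Uj: "U j = U ((j + 1) mod n)"
  proof -
    have "(j + 1 + (n - 1)) mod n = j" using j by simp
    then show ?thesis using P[of "n - 1"] j by simp
  qed
  assume k: "k < n"
  define i where "i = (if j < k then k - j - 1 else k + n - j - 1)"
  have "i < n" "(j + 1 + i) mod n = k" using j k by (auto simp: i_def)
  then show "U k = U j" using P[of i] Uj by simp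
qed

lemma GL:
  fixes n j :: nat and x b0 b2 :: "nat \<Rightarrow> 'l"
  assumes j: "j < n"
  shows "(\<Sum>\<beta>\<in>PiE {..<n} (\<lambda>_. UNIV). (if \<beta> j = b then
            (\<Prod>k<n. F (x k) (\<beta> k) (\<beta> (prv n k)) s (b2 (prv n k)) (b2 k)) *
            (\<Prod>k<n. F (x k) (b0 k) (b0 (prv n k)) t (\<beta> (prv n k)) (\<beta> k)) else 0))
    = (\<Sum>w\<in>UNIV. (\<Prod>k<n. F (x k) (b0 k) (b0 (prv n k)) w (b2 (prv n k)) (b2 k)) *
            (F (b0 j) (b2 j) w s t b * F (b2 j) s b t (b0 j) w))"
proof -
  have n0: "0 < n" using j by simp
  define p where "p = prv n"
  define nx where "nx k = Suc k mod n" for k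
  define L where "L i u a = F (b2 i) s a t (b0 i) u" for i u a
  define K where "K k u = F (x k) (b0 k) (b0 (p k)) u (b2 (p k)) (b2 k)" for k u
  define R where "R k u c = F (b0 k) (b2 k) u s t c" for k u c
  define PE where "PE = PiE {..<n} (\<lambda>_. UNIV::'l set)"
  have finPE: "finite PE" unfolding PE_def by (intro finite_PiE) auto
  have p_lt: "k < n \<Longrightarrow> p k < n" for k using n0 by (simp add: p_def prv_lt)
  have nx_lt: "nx k < n" for k using n0 by (simp add: nx_def)
  have p_nx: "k < n \<Longrightarrow> p (nx k) = k" for k by (simp add: p_def nx_def prv_nx)
  have nx_p: "k < n \<Longrightarrow> nx (p k) = k" for k by (simp add: p_def nx_def nx_prv)
  have reidx: "(\<Prod>k<n. L (p k) (U k) (\<beta> (p k))) = (\<Prod>k<n. L k (U (nx k)) (\<beta> k))" for U \<beta>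
    by (rule prod.reindex_bij_witness[of _ nx p]) (auto simp: p_nx nx_p p_lt nx_lt)
  have step1: "(\<Prod>k<n. F (x k) (\<beta> k) (\<beta> (p k)) s (b2 (p k)) (b2 k)) *
            (\<Prod>k<n. F (x k) (b0 k) (b0 (p k)) t (\<beta> (p k)) (\<beta> k))
     = (\<Sum>U\<in>PE. (\<Prod>k<n. K k (U k)) * (\<Prod>k<n. R k (U k) (\<beta> k) * L k (U (nx k)) (\<beta> k)))" for \<beta>
  proof -
    have "(\<Prod>k<n. F (x k) (\<beta> k) (\<beta> (p k)) s (b2 (p k)) (b2 k)) *
            (\<Prod>k<n. F (x k) (b0 k) (b0 (p k)) t (\<beta> (p k)) (\<beta> k))
       = (\<Prod>k<n. F (x k) (b0 k) (b0 (p k)) t (\<beta> (p k)) (\<beta> k) * F (x k) (\<beta> k) (\<beta> (p k)) s (b2 (p k)) (b2 k))"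
      by (simp add: prod.distrib mult.commute)
    also have "\<dots> = (\<Prod>k<n. \<Sum>u\<in>UNIV. L (p k) u (\<beta> (p k)) * K k u * R k u (\<beta> k))"
      by (simp add: cornerA L_def K_def R_def)
    also have "\<dots> = (\<Sum>U\<in>PE. \<Prod>k<n. L (p k) (U k) (\<beta> (p k)) * K k (U k) * R k (U k) (\<beta> k))"
      unfolding PE_def by (rule prod_sum_PiE) auto
    also have "\<dots> = (\<Sum>U\<in>PE. (\<Prod>k<n. K k (U k)) * (\<Prod>k<n. R k (U k) (\<beta> k) * L k (U (nx k)) (\<beta> k)))"
    proof (rule sum.cong[OF refl])
      fix U
      have "(\<Prod>k<n. L (p k) (U k) (\<beta> (p k)) * K k (U k) * R k (U k) (\<beta> k))
          = (\<Prod>k<n. K k (U k)) * ((\<Prod>k<n. R k (U k) (\<beta> k)) * (\<Prod>k<n. L (p k) (U k) (\<beta> (p k))))"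
        by (simp add: prod.distrib mult_ac)
      also have "\<dots> = (\<Prod>k<n. K k (U k)) * (\<Prod>k<n. R k (U k) (\<beta> k) * L k (U (nx k)) (\<beta> k))"
        by (simp add: reidx prod.distrib)
      finally show "(\<Prod>k<n. L (p k) (U k) (\<beta> (p k)) * K k (U k) * R k (U k) (\<beta> k))
          = (\<Prod>k<n. K k (U k)) * (\<Prod>k<n. R k (U k) (\<beta> k) * L k (U (nx k)) (\<beta> k))" .
    qed
    finally show ?thesis .
  qed
  define T where "T k U = (if k = j then R j (U j) b * L j (U (nx j)) b
      else (if U k = U (nx k) \<and> N s t (U k) \<and> N (b0 k) (b2 k) (U k) then 1 else 0))" for k U
  have step3: "(\<Sum>\<beta>\<in>PE. (if \<beta> j = b then (\<Prod>k<n. R k (U k) (\<beta> k) * L k (U (nx k)) (\<beta> k)) else 0))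
      = (\<Prod>k<n. T k U)" for U
  proof -
    define H where "H k c = (if k = j \<and> c \<noteq> b then 0 else R k (U k) c * L k (U (nx k)) c)" for k c
    have "(\<Sum>\<beta>\<in>PE. (if \<beta> j = b then (\<Prod>k<n. R k (U k) (\<beta> k) * L k (U (nx k)) (\<beta> k)) else 0))
        = (\<Sum>\<beta>\<in>PE. \<Prod>k<n. H k (\<beta> k))"
    proof (rule sum.cong[OF refl])
      fix \<beta>
      show "(if \<beta> j = b then (\<Prod>k<n. R k (U k) (\<beta> k) * L k (U (nx k)) (\<beta> k)) else 0) = (\<Prod>k<n. H k (\<beta> k))"
      proof (cases "\<beta> j = b")
        case True then show ?thesis by (auto simp: H_def intro!: prod.cong)
      next
        case False
        then have "H j (\<beta> j) = 0" by (simp add: H_def)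
        then have "(\<Prod>k<n. H k (\<beta> k)) = 0" using j by (intro prod_zero) auto
        then show ?thesis using False by simp
      qed
    qed
    also have "\<dots> = (\<Prod>k<n. \<Sum>c\<in>UNIV. H k c)"
      unfolding PE_def by (rule prod_sum_PiE[symmetric]) auto
    also have "\<dots> = (\<Prod>k<n. T k U)"
    proof (rule prod.cong[OF refl])
      fix k
      show "(\<Sum>c\<in>UNIV. H k c) = T k U"
      proof (cases "k = j")
        case True
        have "(\<Sum>c\<in>UNIV. H k c) = (\<Sum>c\<in>UNIV. if c = b then R j (U j) c * L j (U (nx j)) c else 0)"
          using True by (intro sum.cong) (auto simp: H_def)
        also have "\<dots> = R j (U j) b * L j (U (nx j)) b" by simp
        finally show ?thesis using True by (simp add: T_def)
      next
        case False
        have "(\<Sum>c\<in>UNIV. H k c) = (\<Sum>c\<in>UNIV. F (b0 k) (b2 k) (U k) s t c * F (b2 k) s c t (b0 k) (U (nx k)))"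
          using False by (simp add: H_def R_def L_def)
        also have "\<dots> = T k U" using False by (simp add: orthB T_def)
        finally show ?thesis .
      qed
    qed
    finally show ?thesis .
  qed
  have step2: "(\<Sum>\<beta>\<in>PE. (if \<beta> j = b then
            (\<Prod>k<n. F (x k) (\<beta> k) (\<beta> (p k)) s (b2 (p k)) (b2 k)) *
            (\<Prod>k<n. F (x k) (b0 k) (b0 (p k)) t (\<beta> (p k)) (\<beta> k)) else 0))
      = (\<Sum>U\<in>PE. (\<Prod>k<n. K k (U k)) * (\<Prod>k<n. T k U))"
  proof -
    have "(\<Sum>\<beta>\<in>PE. (if \<beta> j = b then
            (\<Prod>k<n. F (x k) (\<beta> k) (\<beta> (p k)) s (b2 (p k)) (b2 k)) *
            (\<Prod>k<n. F (x k) (b0 k) (b0 (p k)) t (\<beta> (p k)) (\<beta> k)) else 0))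
       = (\<Sum>\<beta>\<in>PE. \<Sum>U\<in>PE. (\<Prod>k<n. K k (U k)) * (if \<beta> j = b then (\<Prod>k<n. R k (U k) (\<beta> k) * L k (U (nx k)) (\<beta> k)) else 0))"
      by (rule sum.cong[OF refl]) (simp add: step1)
    also have "\<dots> = (\<Sum>U\<in>PE. \<Sum>\<beta>\<in>PE. (\<Prod>k<n. K k (U k)) * (if \<beta> j = b then (\<Prod>k<n. R k (U k) (\<beta> k) * L k (U (nx k)) (\<beta> k)) else 0))"
      by (rule sum.swap)
    also have "\<dots> = (\<Sum>U\<in>PE. (\<Prod>k<n. K k (U k)) * (\<Prod>k<n. T k U))"
      by (rule sum.cong[OF refl]) (simp add: sum_distrib_left[symmetric] step3)
    finally show ?thesis .
  qed
  define \<Phi> where "\<Phi> U = (\<Prod>k<n. K k (U k)) * (\<Prod>k<n. T k U)" for U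
  define cst where "cst w = (\<lambda>k\<in>{..<n}. w)" for w :: 'l
  have cst_in1: "(\<lambda>k\<in>{..<n}. w) \<in> PiE {..<n} (\<lambda>_. UNIV::'l set)" for w :: 'l
    by (rule iffD2[OF restrict_PiE_iff]) simp
  have cst_in: "cst ` UNIV \<subseteq> PE" unfolding PE_def cst_def using cst_in1 by blast
  have vanish: "\<Phi> U = 0" if "U \<in> PE - cst ` UNIV" for U
  proof (rule ccontr)
    assume nz: "\<Phi> U \<noteq> 0"
    have Unx: "U k = U (Suc k mod n)" if "k < n" "k \<noteq> j" for k
    proof -
      have "(\<Prod>k<n. T k U) \<noteq> 0" using nz by (simp add: \<Phi>_def)
      then have "T k U \<noteq> 0" using that by (metis finite_lessThan lessThan_iff prod_zero_iff)
      then have "U k = U (nx k)" using that(2) unfolding T_def by (metis (full_types))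
      then show ?thesis by (simp only: nx_def)
    qed
    have "U k = U j" if "k < n" for k by (rule cyc[where U=U, OF j Unx that])
    then have "\<And>k. k < n \<Longrightarrow> U k = U j" by blast
    moreover have "U \<in> PE" using that by blast
    ultimately have "U = cst (U j)"
    proof (intro ext)
      fix k
      assume A: "\<And>k. k < n \<Longrightarrow> U k = U j" and B: "U \<in> PE"
      show "U k = cst (U j) k"
      proof (cases "k < n")
        case True then show ?thesis using A[OF True] True by (simp add: cst_def)
      next
        case False
        then have "U k = undefined" using PiE_arb[OF B[unfolded PE_def], of k] False by simp
        then show ?thesis using False by (simp add: cst_def)
      qed
    qed
    then have "U \<in> range cst" by (metis rangeI)
    then show False using that by (simp only: Diff_iff) blast
  qed
  have "(\<Sum>U\<in>PE. \<Phi> U) = (\<Sum>U\<in>cst ` UNIV. \<Phi> U)"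
    by (rule sum.mono_neutral_right[OF finPE cst_in]) (use vanish in blast)
  also have "\<dots> = (\<Sum>w\<in>UNIV. \<Phi> (cst w))"
  proof (rule sum.reindex[unfolded comp_def])
    show "inj cst"
    proof (rule injI)
      fix w w' assume "cst w = cst w'"
      then have "cst w 0 = cst w' 0" by simp
      then show "w = w'" using n0 by (simp add: cst_def)
    qed
  qed
  also have "\<dots> = (\<Sum>w\<in>UNIV. (\<Prod>k<n. F (x k) (b0 k) (b0 (prv n k)) w (b2 (prv n k)) (b2 k)) *
            (F (b0 j) (b2 j) w s t b * F (b2 j) s b t (b0 j) w))"
  proof (rule sum.cong[OF refl])
    fix w
    have Kc: "(\<Prod>k<n. K k (cst w k)) = (\<Prod>k<n. F (x k) (b0 k) (b0 (prv n k)) w (b2 (prv n k)) (b2 k))"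
      by (rule prod.cong) (auto simp: K_def cst_def p_def)
    have Tj: "T j (cst w) = F (b0 j) (b2 j) w s t b * F (b2 j) s b t (b0 j) w"
      using j nx_lt[of j] by (simp add: T_def cst_def R_def L_def)
    show "\<Phi> (cst w) = (\<Prod>k<n. F (x k) (b0 k) (b0 (prv n k)) w (b2 (prv n k)) (b2 k)) *
            (F (b0 j) (b2 j) w s t b * F (b2 j) s b t (b0 j) w)"
    proof (cases "(\<Prod>k<n. K k (cst w k)) = 0 \<or> T j (cst w) = 0")
      case True
      then have "\<Phi> (cst w) = 0"
      proof
        assume "T j (cst w) = 0" then show ?thesis using j unfolding \<Phi>_def by (metis finite_lessThan lessThan_iff mult_zero_right prod_zero_iff)
      qed (simp add: \<Phi>_def)
      then show ?thesis using True Kc Tj by auto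
    next
      case False
      then have Knz: "K k w \<noteq> 0" if "k < n" for k using that by (auto simp: cst_def)
      have Nk: "N (b0 k) (b2 k) w" if "k < n" for k
        using adm[OF Knz[OF that, unfolded K_def]] Np2 by blast
      have "F (b0 j) (b2 j) w s t b \<noteq> 0" using False Tj by auto
      then have Nst: "N s t w" using adm by blast
      have T1: "T k (cst w) = 1" if "k < n" "k \<noteq> j" for k
        using that nx_lt[of k] Nk[OF that(1)] Nst by (simp add: T_def cst_def)
      have "(\<Prod>k<n. T k (cst w)) = T j (cst w) * (\<Prod>k\<in>{..<n}-{j}. T k (cst w))"
        using j by (simp add: prod.remove)
      also have "(\<Prod>k\<in>{..<n}-{j}. T k (cst w)) = 1" by (rule prod.neutral) (use T1 in auto)
      finally have "(\<Prod>k<n. T k (cst w)) = T j (cst w)" by simp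
      then show ?thesis by (simp add: \<Phi>_def Kc Tj)
    qed
  qed
  finally have main: "(\<Sum>U\<in>PE. \<Phi> U) = (\<Sum>w\<in>UNIV. (\<Prod>k<n. F (x k) (b0 k) (b0 (prv n k)) w (b2 (prv n k)) (b2 k)) *
            (F (b0 j) (b2 j) w s t b * F (b2 j) s b t (b0 j) w))" .
  show ?thesis using step2 main unfolding \<Phi>_def PE_def p_def by simp
qed

lemma distr_aux: "(c::complex) * (\<Sum>w\<in>A. f w * g w) = (\<Sum>w\<in>A. f w * (c * g w))"
  by (simp add: sum_distrib_left mult.left_commute)

lemma GL2:
  fixes n j :: nat and x b0 b2 :: "nat \<Rightarrow> 'l"
  assumes j: "j < n"
  shows "(\<Sum>s\<in>UNIV. \<Sum>t\<in>UNIV. cd s * cd t * (\<Sum>\<beta>\<in>PiE {..<n} (\<lambda>_. UNIV). (if \<beta> j = b then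
            (\<Prod>k<n. F (x k) (\<beta> k) (\<beta> (prv n k)) s (b2 (prv n k)) (b2 k)) *
            (\<Prod>k<n. F (x k) (b0 k) (b0 (prv n k)) t (\<beta> (prv n k)) (\<beta> k)) else 0)))
    = cd b * cd b * (\<Sum>w\<in>UNIV. cd w * (\<Prod>k<n. F (x k) (b0 k) (b0 (prv n k)) w (b2 (prv n k)) (b2 k)))"
proof -
  define KK where "KK w = (\<Prod>k<n. F (x k) (b0 k) (b0 (prv n k)) w (b2 (prv n k)) (b2 k))" for w
  have "(\<Sum>s\<in>UNIV. \<Sum>t\<in>UNIV. cd s * cd t * (\<Sum>\<beta>\<in>PiE {..<n} (\<lambda>_. UNIV). (if \<beta> j = b then
            (\<Prod>k<n. F (x k) (\<beta> k) (\<beta> (prv n k)) s (b2 (prv n k)) (b2 k)) *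
            (\<Prod>k<n. F (x k) (b0 k) (b0 (prv n k)) t (\<beta> (prv n k)) (\<beta> k)) else 0)))
      = (\<Sum>s\<in>UNIV. \<Sum>t\<in>UNIV. cd s * cd t * (\<Sum>w\<in>UNIV. KK w * (F (b0 j) (b2 j) w s t b * F (b2 j) s b t (b0 j) w)))"
    by (simp only: GL[OF j] KK_def)
  also have "\<dots> = (\<Sum>w\<in>UNIV. KK w * (\<Sum>s\<in>UNIV. \<Sum>t\<in>UNIV. cd s * cd t * (F (b0 j) (b2 j) w s t b * F (b2 j) s b t (b0 j) w)))"
  proof -
    have "(\<Sum>s\<in>UNIV. \<Sum>t\<in>UNIV. cd s * cd t * (\<Sum>w\<in>UNIV. KK w * (F (b0 j) (b2 j) w s t b * F (b2 j) s b t (b0 j) w)))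
       = (\<Sum>s\<in>UNIV. \<Sum>t\<in>UNIV. \<Sum>w\<in>UNIV. KK w * (cd s * cd t * (F (b0 j) (b2 j) w s t b * F (b2 j) s b t (b0 j) w)))"
      by (simp only: distr_aux)
    also have "\<dots> = (\<Sum>s\<in>UNIV. \<Sum>w\<in>UNIV. \<Sum>t\<in>UNIV. KK w * (cd s * cd t * (F (b0 j) (b2 j) w s t b * F (b2 j) s b t (b0 j) w)))"
      by (rule sum.cong[OF refl], rule sum.swap)
    also have "\<dots> = (\<Sum>w\<in>UNIV. \<Sum>s\<in>UNIV. \<Sum>t\<in>UNIV. KK w * (cd s * cd t * (F (b0 j) (b2 j) w s t b * F (b2 j) s b t (b0 j) w)))"
      by (rule sum.swap)
    also have "\<dots> = (\<Sum>w\<in>UNIV. KK w * (\<Sum>s\<in>UNIV. \<Sum>t\<in>UNIV. cd s * cd t * (F (b0 j) (b2 j) w s t b * F (b2 j) s b t (b0 j) w)))"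
      by (simp add: sum_distrib_left)
    finally show ?thesis .
  qed
  also have "\<dots> = (\<Sum>w\<in>UNIV. KK w * (cd b * cd b * cd w))"
  proof (rule sum.cong[OF refl])
    fix w
    show "KK w * (\<Sum>s\<in>UNIV. \<Sum>t\<in>UNIV. cd s * cd t * (F (b0 j) (b2 j) w s t b * F (b2 j) s b t (b0 j) w)) = KK w * (cd b * cd b * cd w)"
    proof (cases "KK w = 0")
      case False
      then have nz: "F (x j) (b0 j) (b0 (prv n j)) w (b2 (prv n j)) (b2 j) \<noteq> 0"
        using j unfolding KK_def by (simp add: prod_zero_iff)
      have "N (b0 j) w (b2 j)" using adm[OF nz] by simp
      then have "N (b0 j) (b2 j) w" using Np2[of "b0 j" w "b2 j"] by simp
      then show ?thesis using sumC[OF \<open>N (b0 j) (b2 j) w\<close>, of b] by simp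
    qed simp
  qed
  also have "\<dots> = cd b * cd b * (\<Sum>w\<in>UNIV. cd w * KK w)"
    by (simp add: sum_distrib_left mult_ac)
  finally show ?thesis by (simp only: KK_def)
qed

lemma SL:
  fixes bs xs :: "'e::finite list" and \<sigma>'' \<sigma>0 :: "'e \<Rightarrow> 'l"
  assumes dist: "distinct bs" and lxs: "length xs = length bs" and disj: "set xs \<inter> set bs = {}"
    and j: "j < length bs"
  shows "(\<Sum>s\<in>UNIV. \<Sum>t\<in>UNIV. cd s * cd t * (\<Sum>\<sigma>\<in>UNIV. if \<sigma> (bs ! j) = b then Kr F bs xs s \<sigma>'' \<sigma> * Kr F bs xs t \<sigma> \<sigma>0 else 0))
     = cd b * cd b * (\<Sum>w\<in>UNIV. cd w * Kr F bs xs w \<sigma>'' \<sigma>0)"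
proof (cases "\<forall>x. x \<notin> set bs \<longrightarrow> \<sigma>'' x = \<sigma>0 x")
  case False
  have z: "Kr F bs xs s \<sigma>'' \<sigma> * Kr F bs xs t \<sigma> \<sigma>0 = 0" for s t \<sigma>
    using False by (auto simp: Kr_def)
  have "(if \<sigma> (bs ! j) = b then Kr F bs xs s \<sigma>'' \<sigma> * Kr F bs xs t \<sigma> \<sigma>0 else 0) = 0" for s t \<sigma>
    by (simp only: z if_cancel)
  moreover have "Kr F bs xs w \<sigma>'' \<sigma>0 = 0" for w unfolding Kr_def by (rule if_not_P[OF False])
  ultimately show ?thesis by simp
next
  case agr: True
  define n where "n = length bs"
  define x where "x k = \<sigma>0 (xs ! k)" for k
  define b0 where "b0 k = \<sigma>0 (bs ! k)" for k
  define b2 where "b2 k = \<sigma>'' (bs ! k)" for k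
  define S0 where "S0 = {\<sigma>::'e \<Rightarrow> 'l. \<forall>x. x \<notin> set bs \<longrightarrow> \<sigma> x = \<sigma>0 x}"
  define PE where "PE = PiE {..<n} (\<lambda>_. UNIV::'l set)"
  define ix where "ix y = (SOME k. k < n \<and> bs ! k = y)" for y
  have n0: "0 < n" using j n_def by linarith
  have ix1: "k < n \<Longrightarrow> ix (bs ! k) = k" for k
  proof -
    assume k: "k < n"
    have "ix (bs ! k) < n \<and> bs ! (ix (bs ! k)) = bs ! k"
      unfolding ix_def by (rule someI[of _ k]) (use k in simp)
    then show ?thesis using dist k n_def by (metis nth_eq_iff_index_eq)
  qed
  have ix2: "y \<in> set bs \<Longrightarrow> ix y < n \<and> bs ! (ix y) = y" for y
  proof -
    assume "y \<in> set bs"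
    then obtain k where "k < n" "bs ! k = y" by (auto simp: in_set_conv_nth n_def)
    then show ?thesis unfolding ix_def by (metis (mono_tags, lifting) someI)
  qed
  have xs_out: "k < n \<Longrightarrow> xs ! k \<notin> set bs" for k
    using disj lxs n_def by (metis disjoint_iff nth_mem)
  have p_lt: "k < n \<Longrightarrow> prv n k < n" for k using n0 by (simp add: prv_lt)
  have inner: "(\<Sum>\<sigma>\<in>UNIV. if \<sigma> (bs ! j) = b then Kr F bs xs s \<sigma>'' \<sigma> * Kr F bs xs t \<sigma> \<sigma>0 else 0)
     = (\<Sum>\<beta>\<in>PE. (if \<beta> j = b then
            (\<Prod>k<n. F (x k) (\<beta> k) (\<beta> (prv n k)) s (b2 (prv n k)) (b2 k)) *
            (\<Prod>k<n. F (x k) (b0 k) (b0 (prv n k)) t (\<beta> (prv n k)) (\<beta> k)) else 0))" for s t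
  proof -
    have "(\<Sum>\<sigma>\<in>UNIV. if \<sigma> (bs ! j) = b then Kr F bs xs s \<sigma>'' \<sigma> * Kr F bs xs t \<sigma> \<sigma>0 else 0)
        = (\<Sum>\<sigma>\<in>S0. if \<sigma> (bs ! j) = b then Kr F bs xs s \<sigma>'' \<sigma> * Kr F bs xs t \<sigma> \<sigma>0 else 0)"
    proof (rule sum.mono_neutral_right)
      show "\<forall>\<sigma>\<in>UNIV - S0. (if \<sigma> (bs ! j) = b then Kr F bs xs s \<sigma>'' \<sigma> * Kr F bs xs t \<sigma> \<sigma>0 else 0) = 0"
      proof
        fix \<sigma> assume "\<sigma> \<in> UNIV - S0"
        then have "\<not> (\<forall>x. x \<notin> set bs \<longrightarrow> \<sigma> x = \<sigma>0 x)" by (simp add: S0_def)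
        then have "Kr F bs xs t \<sigma> \<sigma>0 = 0" unfolding Kr_def by (rule if_not_P)
        then show "(if \<sigma> (bs ! j) = b then Kr F bs xs s \<sigma>'' \<sigma> * Kr F bs xs t \<sigma> \<sigma>0 else 0) = 0" by simp
      qed
    qed simp_all
    also have "\<dots> = (\<Sum>\<beta>\<in>PE. (if \<beta> j = b then
            (\<Prod>k<n. F (x k) (\<beta> k) (\<beta> (prv n k)) s (b2 (prv n k)) (b2 k)) *
            (\<Prod>k<n. F (x k) (b0 k) (b0 (prv n k)) t (\<beta> (prv n k)) (\<beta> k)) else 0))"
    proof (rule sum.reindex_bij_witness[of _ "\<lambda>\<beta> y. if y \<in> set bs then \<beta> (ix y) else \<sigma>0 y"
          "\<lambda>\<sigma>. \<lambda>k\<in>{..<n}. \<sigma> (bs ! k)"])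
      fix \<sigma> assume "\<sigma> \<in> S0"
      then have sS: "\<forall>x. x \<notin> set bs \<longrightarrow> \<sigma> x = \<sigma>0 x" by (simp add: S0_def)
      show "(\<lambda>y. if y \<in> set bs then (\<lambda>k\<in>{..<n}. \<sigma> (bs ! k)) (ix y) else \<sigma>0 y) = \<sigma>"
      proof (rule ext)
        fix y
        show "(if y \<in> set bs then (\<lambda>k\<in>{..<n}. \<sigma> (bs ! k)) (ix y) else \<sigma>0 y) = \<sigma> y"
        proof (cases "y \<in> set bs")
          case True
          then have "ix y < n" "bs ! (ix y) = y" using ix2 by auto
          then show ?thesis using True by simp
        next
          case False then show ?thesis using sS by simp
        qed
      qed
    next
      fix \<sigma> :: "'e \<Rightarrow> 'l"
      show "(\<lambda>k\<in>{..<n}. \<sigma> (bs ! k)) \<in> PE" unfolding PE_def by (rule iffD2[OF restrict_PiE_iff]) simp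
    next
      fix \<beta> assume b: "\<beta> \<in> PE"
      show "(\<lambda>k\<in>{..<n}. (\<lambda>y. if y \<in> set bs then \<beta> (ix y) else \<sigma>0 y) (bs ! k)) = \<beta>"
      proof (rule ext)
        fix k
        show "(\<lambda>k\<in>{..<n}. (\<lambda>y. if y \<in> set bs then \<beta> (ix y) else \<sigma>0 y) (bs ! k)) k = \<beta> k"
        proof (cases "k < n")
          case True then show ?thesis using ix1[OF True] n_def by simp
        next
          case False
          then have "\<beta> k = undefined" using PiE_arb[OF b[unfolded PE_def], of k] by simp
          then show ?thesis using False by simp
        qed
      qed
    next
      fix \<beta> :: "nat \<Rightarrow> 'l"
      show "(\<lambda>y. if y \<in> set bs then \<beta> (ix y) else \<sigma>0 y) \<in> S0" by (simp add: S0_def)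
    next
      fix \<sigma> assume sS: "\<sigma> \<in> S0"
      define \<beta> where "\<beta> = (\<lambda>k\<in>{..<n}. \<sigma> (bs ! k))"
      have bk: "k < n \<Longrightarrow> \<beta> k = \<sigma> (bs ! k)" for k by (simp add: \<beta>_def)
      have agr1: "\<forall>x. x \<notin> set bs \<longrightarrow> \<sigma>'' x = \<sigma> x" using agr sS by (simp add: S0_def)
      have agr2: "\<forall>x. x \<notin> set bs \<longrightarrow> \<sigma> x = \<sigma>0 x" using sS by (simp add: S0_def)
      have xo: "k < n \<Longrightarrow> \<sigma> (xs ! k) = \<sigma>0 (xs ! k)" for k using agr2 xs_out by blast
      have P1: "Kr F bs xs s \<sigma>'' \<sigma> = (\<Prod>k<n. F (x k) (\<beta> k) (\<beta> (prv n k)) s (b2 (prv n k)) (b2 k))"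
      proof -
        have "Kr F bs xs s \<sigma>'' \<sigma> = (\<Prod>k<n. F (\<sigma> (xs ! k)) (\<sigma> (bs ! k)) (\<sigma> (bs ! prv n k)) s (\<sigma>'' (bs ! prv n k)) (\<sigma>'' (bs ! k)))"
          unfolding Kr_def n_def by (rule if_P[OF agr1])
        also have "\<dots> = (\<Prod>k<n. F (x k) (\<beta> k) (\<beta> (prv n k)) s (b2 (prv n k)) (b2 k))"
          by (rule prod.cong[OF refl]) (simp add: x_def b2_def bk p_lt xo)
        finally show ?thesis .
      qed
      have P2: "Kr F bs xs t \<sigma> \<sigma>0 = (\<Prod>k<n. F (x k) (b0 k) (b0 (prv n k)) t (\<beta> (prv n k)) (\<beta> k))"
      proof -
        have "Kr F bs xs t \<sigma> \<sigma>0 = (\<Prod>k<n. F (\<sigma>0 (xs ! k)) (\<sigma>0 (bs ! k)) (\<sigma>0 (bs ! prv n k)) t (\<sigma> (bs ! prv n k)) (\<sigma> (bs ! k)))"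
          unfolding Kr_def n_def by (rule if_P[OF agr2])
        also have "\<dots> = (\<Prod>k<n. F (x k) (b0 k) (b0 (prv n k)) t (\<beta> (prv n k)) (\<beta> k))"
          by (rule prod.cong[OF refl]) (simp add: x_def b0_def bk p_lt)
        finally show ?thesis .
      qed
      have "\<beta> j = \<sigma> (bs ! j)" using j n_def bk by simp
      then show "(if (\<lambda>k\<in>{..<n}. \<sigma> (bs ! k)) j = b then
            (\<Prod>k<n. F (x k) ((\<lambda>k\<in>{..<n}. \<sigma> (bs ! k)) k) ((\<lambda>k\<in>{..<n}. \<sigma> (bs ! k)) (prv n k)) s (b2 (prv n k)) (b2 k)) *
            (\<Prod>k<n. F (x k) (b0 k) (b0 (prv n k)) t ((\<lambda>k\<in>{..<n}. \<sigma> (bs ! k)) (prv n k)) ((\<lambda>k\<in>{..<n}. \<sigma> (bs ! k)) k)) else 0)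
          = (if \<sigma> (bs ! j) = b then Kr F bs xs s \<sigma>'' \<sigma> * Kr F bs xs t \<sigma> \<sigma>0 else 0)"
        using P1 P2 unfolding \<beta>_def by simp
    qed
    finally show ?thesis .
  qed
  have KrW: "Kr F bs xs w \<sigma>'' \<sigma>0 = (\<Prod>k<n. F (x k) (b0 k) (b0 (prv n k)) w (b2 (prv n k)) (b2 k))" for w
    unfolding Kr_def using agr by (simp add: n_def[symmetric] x_def b0_def b2_def)
  show ?thesis
    unfolding inner KrW PE_def using GL2[of j n b x b2 b0] j n_def by simp
qed

end

lemma rearr:
  fixes c :: "'s \<Rightarrow> complex" and K :: "'s \<Rightarrow> 'a \<Rightarrow> complex"
  assumes "finite S" "finite T"
  shows "(\<Sum>s\<in>S. c s * (\<Sum>\<sigma>\<in>T. K s \<sigma> * (G \<sigma> * (\<Sum>t\<in>S. c t * (\<Sum>\<sigma>0\<in>T. L t \<sigma> \<sigma>0 * P \<sigma>0)))))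
       = (\<Sum>\<sigma>0\<in>T. (\<Sum>s\<in>S. \<Sum>t\<in>S. c s * c t * (\<Sum>\<sigma>\<in>T. G \<sigma> * (K s \<sigma> * L t \<sigma> \<sigma>0))) * P \<sigma>0)"
proof -
  define h where "h s \<sigma> t \<sigma>0 = c s * c t * (G \<sigma> * (K s \<sigma> * L t \<sigma> \<sigma>0)) * P \<sigma>0" for s \<sigma> t \<sigma>0
  have "(\<Sum>s\<in>S. c s * (\<Sum>\<sigma>\<in>T. K s \<sigma> * (G \<sigma> * (\<Sum>t\<in>S. c t * (\<Sum>\<sigma>0\<in>T. L t \<sigma> \<sigma>0 * P \<sigma>0)))))
      = (\<Sum>s\<in>S. \<Sum>\<sigma>\<in>T. \<Sum>t\<in>S. \<Sum>\<sigma>0\<in>T. h s \<sigma> t \<sigma>0)"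
    by (simp add: h_def sum_distrib_left mult_ac)
  also have "\<dots> = (\<Sum>s\<in>S. \<Sum>\<sigma>\<in>T. \<Sum>\<sigma>0\<in>T. \<Sum>t\<in>S. h s \<sigma> t \<sigma>0)"
    by (intro sum.cong refl sum.swap)
  also have "\<dots> = (\<Sum>s\<in>S. \<Sum>\<sigma>0\<in>T. \<Sum>\<sigma>\<in>T. \<Sum>t\<in>S. h s \<sigma> t \<sigma>0)"
    by (intro sum.cong refl sum.swap)
  also have "\<dots> = (\<Sum>\<sigma>0\<in>T. \<Sum>s\<in>S. \<Sum>\<sigma>\<in>T. \<Sum>t\<in>S. h s \<sigma> t \<sigma>0)"
    by (rule sum.swap)
  also have "\<dots> = (\<Sum>\<sigma>0\<in>T. \<Sum>s\<in>S. \<Sum>t\<in>S. \<Sum>\<sigma>\<in>T. h s \<sigma> t \<sigma>0)"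
    by (intro sum.cong refl sum.swap)
  also have "\<dots> = (\<Sum>\<sigma>0\<in>T. (\<Sum>s\<in>S. \<Sum>t\<in>S. c s * c t * (\<Sum>\<sigma>\<in>T. G \<sigma> * (K s \<sigma> * L t \<sigma> \<sigma>0))) * P \<sigma>0)"
    by (simp add: h_def sum_distrib_left sum_distrib_right mult_ac)
  finally show ?thesis .
qed

theorem lemma11:
  fixes one :: "'l::finite"
    and N :: "'l \<Rightarrow> 'l \<Rightarrow> 'l \<Rightarrow> bool"
    and d :: "'l \<Rightarrow> real"
    and F :: "'l \<Rightarrow> 'l \<Rightarrow> 'l \<Rightarrow> 'l \<Rightarrow> 'l \<Rightarrow> 'l \<Rightarrow> complex"
    and S :: "'l \<Rightarrow> 'l \<Rightarrow> complex"
    and inc :: "'v::finite \<Rightarrow> 'e::finite set"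
    and bs xs :: "'e list" and vs :: "'v list"
    and a :: 'l and e :: 'e and \<psi> :: "('e, 'l) state"
  assumes "fusion_category one N d F"
    and "S_matrix one d S"
    and "trivalent_lattice inc"
    and "is_plaquette inc bs xs vs"
    and "e \<in> set bs"
    and "a \<noteq> one"
    and "\<psi> \<in> H_valid N inc"
    and "B_p d F bs xs \<psi> = \<psi>"
  shows "B_p d F bs xs (O_op S one a e \<psi>) = (\<lambda>\<sigma>. 0)"
proof -
  interpret FC one N d F by (rule FC.intro) (rule assms(1))
  have dist: "distinct bs" and lxs: "length xs = length bs" and disj: "set xs \<inter> set bs = {}"
    using assms(4) unfolding is_plaquette_def by auto
  obtain j where j: "j < length bs" and ej: "bs ! j = e" using assms(5) by (auto simp: in_set_conv_nth)
  define TD where "TD = totalD d"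
  have "(\<Sum>i\<in>UNIV. (d i)\<^sup>2) > 0"
    by (rule sum_pos) (use d_pos in \<open>auto simp: less_le\<close>)
  then have TDpos: "TD > 0" unfolding TD_def totalD_def by simp
  define D where "D = complex_of_real TD"
  have Dnz: "D \<noteq> 0" using TDpos by (simp add: D_def)
  have Sm: "\<forall>a c. (\<Sum>b\<in>UNIV. S a b * cnj (S c b)) = (if a = c then 1 else 0)"
    and Sone0: "\<forall>b. S one b = complex_of_real (d b / totalD d)"
    using assms(2) unfolding S_matrix_def by blast+
  have Sone: "S one b = cd b / D" for b using Sone0 by (simp add: D_def TD_def)
  have Sone_cnj: "cnj (S one b) = S one b" for b using Sone0 by simp
  have Sone_nz: "S one b \<noteq> 0" for b using Sone d_pos[of b] Dnz by simp
  define g where "g b = S a b / S one b" for b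
  have gsum: "(\<Sum>b\<in>UNIV. g b * (cd b * cd b)) = 0"
  proof -
    have "g b * (cd b * cd b) = D * D * (S a b * cnj (S one b))" for b
    proof -
      have cdb: "cd b = D * S one b" using Sone[of b] Dnz by simp
      show ?thesis unfolding g_def Sone_cnj cdb using Sone_nz[of b] by (simp add: field_simps)
    qed
    then have "(\<Sum>b\<in>UNIV. g b * (cd b * cd b)) = D * D * (\<Sum>b\<in>UNIV. S a b * cnj (S one b))"
      by (simp add: sum_distrib_left)
    also have "\<dots> = 0" using Sm assms(6) by simp
    finally show ?thesis .
  qed
  define cs where "cs s = complex_of_real (d s / (totalD d)\<^sup>2)" for s
  have cs_eq: "cs s = cd s / (D * D)" for s by (simp add: cs_def D_def TD_def power2_eq_square)
  have split_e: "(\<Sum>\<sigma>\<in>UNIV. g (\<sigma> e) * X \<sigma>) = (\<Sum>b\<in>UNIV. g b * (\<Sum>\<sigma>\<in>UNIV. if \<sigma> (bs ! j) = b then X \<sigma> else 0))"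
    for X :: "('e \<Rightarrow> 'l) \<Rightarrow> complex"
  proof -
    have "(\<Sum>b\<in>UNIV. g b * (\<Sum>\<sigma>\<in>UNIV. if \<sigma> (bs ! j) = b then X \<sigma> else 0))
        = (\<Sum>b\<in>UNIV. \<Sum>\<sigma>\<in>UNIV. if \<sigma> e = b then g b * X \<sigma> else 0)"
      unfolding sum_distrib_left ej by (intro sum.cong refl) simp
    also have "\<dots> = (\<Sum>\<sigma>\<in>UNIV. \<Sum>b\<in>UNIV. if \<sigma> e = b then g b * X \<sigma> else 0)"
      by (rule sum.swap)
    also have "\<dots> = (\<Sum>\<sigma>\<in>UNIV. g (\<sigma> e) * X \<sigma>)"
      by (simp add: sum.delta)
    finally show ?thesis by simp
  qed
  have Z: "(\<Sum>s\<in>UNIV. \<Sum>t\<in>UNIV. cs s * cs t * (\<Sum>\<sigma>\<in>UNIV. g (\<sigma> e) * (Kr F bs xs s \<sigma>'' \<sigma> * Kr F bs xs t \<sigma> \<sigma>0))) = 0"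
    for \<sigma>'' \<sigma>0
  proof -
    define Y where "Y b s t = (\<Sum>\<sigma>\<in>UNIV. if \<sigma> (bs ! j) = b then Kr F bs xs s \<sigma>'' \<sigma> * Kr F bs xs t \<sigma> \<sigma>0 else 0)" for b s t
    define W where "W = (\<Sum>w\<in>UNIV. cd w * Kr F bs xs w \<sigma>'' \<sigma>0)"
    have SLi: "(\<Sum>s\<in>UNIV. \<Sum>t\<in>UNIV. cd s * cd t * Y b s t) = cd b * cd b * W" for b
      unfolding Y_def W_def by (rule SL[OF dist lxs disj j])
    have "(\<Sum>s\<in>UNIV. \<Sum>t\<in>UNIV. cs s * cs t * (\<Sum>\<sigma>\<in>UNIV. g (\<sigma> e) * (Kr F bs xs s \<sigma>'' \<sigma> * Kr F bs xs t \<sigma> \<sigma>0)))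
        = (\<Sum>s\<in>UNIV. \<Sum>t\<in>UNIV. cs s * cs t * (\<Sum>b\<in>UNIV. g b * Y b s t))"
      by (simp only: split_e Y_def)
    also have "\<dots> = (\<Sum>b\<in>UNIV. \<Sum>s\<in>UNIV. \<Sum>t\<in>UNIV. g b * (cs s * cs t * Y b s t))"
    proof -
      have "(\<Sum>s\<in>UNIV. \<Sum>t\<in>UNIV. cs s * cs t * (\<Sum>b\<in>UNIV. g b * Y b s t))
          = (\<Sum>s\<in>UNIV. \<Sum>t\<in>UNIV. \<Sum>b\<in>UNIV. g b * (cs s * cs t * Y b s t))"
        by (simp only: distr_aux)
      also have "\<dots> = (\<Sum>s\<in>UNIV. \<Sum>b\<in>UNIV. \<Sum>t\<in>UNIV. g b * (cs s * cs t * Y b s t))"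
        by (intro sum.cong refl sum.swap)
      also have "\<dots> = (\<Sum>b\<in>UNIV. \<Sum>s\<in>UNIV. \<Sum>t\<in>UNIV. g b * (cs s * cs t * Y b s t))"
        by (rule sum.swap)
      finally show ?thesis .
    qed
    also have "\<dots> = (\<Sum>b\<in>UNIV. g b / (D * D * (D * D)) * (\<Sum>s\<in>UNIV. \<Sum>t\<in>UNIV. cd s * cd t * Y b s t))"
      by (simp add: sum_distrib_left cs_eq mult_ac)
    also have "\<dots> = (\<Sum>b\<in>UNIV. g b / (D * D * (D * D)) * (cd b * cd b * W))"
      by (simp only: SLi)
    also have "\<dots> = W / (D * D * (D * D)) * (\<Sum>b\<in>UNIV. g b * (cd b * cd b))"
      by (simp add: sum_distrib_left mult_ac)
    also have "\<dots> = 0" by (simp only: gsum mult_zero_right)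
    finally show ?thesis .
  qed
  have psi: "\<psi> \<sigma> = (\<Sum>t\<in>UNIV. cs t * (\<Sum>\<sigma>0\<in>UNIV. Kr F bs xs t \<sigma> \<sigma>0 * \<psi> \<sigma>0))" for \<sigma>
  proof -
    have "\<psi> \<sigma> = B_p d F bs xs \<psi> \<sigma>" using assms(8) by simp
    also have "\<dots> = (\<Sum>t\<in>UNIV. cs t * (\<Sum>\<sigma>0\<in>UNIV. Kr F bs xs t \<sigma> \<sigma>0 * \<psi> \<sigma>0))"
      by (simp add: B_p_def Bs_eq cs_def)
    finally show ?thesis .
  qed
  show ?thesis
  proof (rule ext)
    fix \<sigma>''
    have "B_p d F bs xs (O_op S one a e \<psi>) \<sigma>''
        = (\<Sum>s\<in>UNIV. cs s * (\<Sum>\<sigma>\<in>UNIV. Kr F bs xs s \<sigma>'' \<sigma> * (g (\<sigma> e) * \<psi> \<sigma>)))"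
      by (simp add: B_p_def Bs_eq cs_def O_op_def g_def)
    also have "\<dots> = (\<Sum>s\<in>UNIV. cs s * (\<Sum>\<sigma>\<in>UNIV. Kr F bs xs s \<sigma>'' \<sigma> * (g (\<sigma> e) *
          (\<Sum>t\<in>UNIV. cs t * (\<Sum>\<sigma>0\<in>UNIV. Kr F bs xs t \<sigma> \<sigma>0 * \<psi> \<sigma>0)))))"
      by (simp only: psi[symmetric])
    also have "\<dots> = (\<Sum>\<sigma>0\<in>UNIV. (\<Sum>s\<in>UNIV. \<Sum>t\<in>UNIV. cs s * cs t *
          (\<Sum>\<sigma>\<in>UNIV. g (\<sigma> e) * (Kr F bs xs s \<sigma>'' \<sigma> * Kr F bs xs t \<sigma> \<sigma>0))) * \<psi> \<sigma>0)"
      by (rule rearr) simp_all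
    also have "\<dots> = 0" by (simp only: Z mult_zero_left sum.neutral_const)
    finally show "B_p d F bs xs (O_op S one a e \<psi>) \<sigma>'' = 0" .
  qed
qed

end
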